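(* For every integer $n\ge 0$, as polynomials in $u$, $$P_{n+1}(u;0,1)=\frac{u}{2^n}\,S_n\!\left(u;0,1,-\tfrac12\right).$$ In particular, all coefficients of the polynomial $2^{-n}S_n(u;0,1,-\tfrac12)$ are integers.
   Context: Eulerian numbers: $\left\langle {n\atop k}\right\rangle$ is the number of permutations of $\{1,\dots,n\}$ with exactly $k$ ascents (indices $j$ with $a_j<a_{j+1}$). Define $P_1(u;a,b)=u-a$ and, for $n\ge1$, $P_{n+1}(u;a,b)=\sum_{k=0}^{n-1}\left\langle {n\atop k}\right\rangle (u-a)^{k+1}(u-b)^{n-k}$. The MacMahon numbers $M_{n,k}$ ($n\ge1$, $1\le k\le n$) are defined by $M_{n,1}=1$ and, for $n\ge 2$, $2\le k\le n$, $M_{n,k}=(2k-1)M_{n-1,k}+(2n-2k+1)M_{n-1,k-1}$, with $M_{n-1,n}=0$. Define $Q_n(u;a,b)=\sum_{k=1}^{n+1}M_{n+1,k}(u-a)^{n+1-k}(u-b)^{k-1}$ and $S_n(u;a,b,d)=\sum_{k=0}^{n}\binom{n}{k}(2d)^kQ_{n-k}(u;a,b)$. *)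

theory Defs
  imports Complex_Main "HOL-Computational_Algebra.Polynomial"
begin

definition ascents :: "nat list \<Rightarrow> nat" where
  "ascents xs = card {j. Suc j < length xs \<and> xs ! j < xs ! Suc j}"

definition eulerian :: "nat \<Rightarrow> nat \<Rightarrow> nat" where
  "eulerian n k = card {xs. distinct xs \<and> set xs = {1..n} \<and> ascents xs = k}"

text \<open>P n a b is the polynomial P_n(u;a,b) in the variable u (defined for n \<ge> 1; P 0 = 0 is a dummy).\<close>

fun Ppoly :: "nat \<Rightarrow> real \<Rightarrow> real \<Rightarrow> real poly" where
  "Ppoly 0 a b = 0"
| "Ppoly (Suc 0) a b = [:-a, 1:]"
| "Ppoly (Suc (Suc m)) a b =
     (\<Sum>k=0..m. of_nat (eulerian (Suc m) k) * [:-a, 1:] ^ (k + 1) * [:-b, 1:] ^ (Suc m - k))"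

text \<open>MacMahon numbers M n k for 1 \<le> k \<le> n; the value is 0 outside this range
  (in particular M_{n-1,n} = 0).\<close>

fun macmahon :: "nat \<Rightarrow> nat \<Rightarrow> nat" where
  "macmahon 0 k = 0"
| "macmahon (Suc m) k =
     (if k = 0 \<or> k > Suc m then 0
      else if k = 1 then 1
      else (2 * k - 1) * macmahon m k + (2 * Suc m - 2 * k + 1) * macmahon m (k - 1))"

definition Qpoly :: "nat \<Rightarrow> real \<Rightarrow> real \<Rightarrow> real poly" where
  "Qpoly n a b = (\<Sum>k=1..n+1. of_nat (macmahon (n+1) k) * [:-a, 1:] ^ (n + 1 - k) * [:-b, 1:] ^ (k - 1))"

definition Spoly :: "nat \<Rightarrow> real \<Rightarrow> real \<Rightarrow> real \<Rightarrow> real poly" where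
  "Spoly n a b d = (\<Sum>k=0..n. of_nat (n choose k) * [:(2 * d) ^ k:] * Qpoly (n - k) a b)"

end

theory Submission
  imports Defs
begin


fun asc' :: "nat list \<Rightarrow> nat" where
  "asc' (x#y#zs) = (if x<y then 1 else 0) + asc' (y#zs)"
| "asc' _ = 0"

lemma ascents_Cons2: "ascents (x#y#zs) = (if x<y then 1 else 0) + ascents (y#zs)"
proof -
  let ?A = "{j. Suc j < length (y#zs) \<and> (y#zs)!j < (y#zs)!Suc j}"
  have e: "{j. Suc j < length (x#y#zs) \<and> (x#y#zs)!j < (x#y#zs)!Suc j}
      = (if x<y then {0} else {}) \<union> Suc ` ?A" (is "?L = ?R")
  proof (rule set_eqI)
    fix j show "j\<in>?L \<longleftrightarrow> j\<in>?R" by (cases j) auto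
  qed
  have fin: "finite ?A" by (rule finite_subset[of _ "{..<length (y#zs)}"]) auto
  have "card ?R = (if x<y then 1 else 0) + card ?A"
    using fin by (auto simp: card_image card_insert_if)
  then show ?thesis unfolding ascents_def e by simp
qed

lemma asc_eq: "ascents xs = asc' xs"
  by (induction xs rule: asc'.induct) (simp_all add: ascents_Cons2, simp_all add: ascents_def)

lemma asc'_append: "asc' (as @ bs) = asc' as + asc' bs + (if as \<noteq> [] \<and> bs \<noteq> [] \<and> last as < hd bs then 1 else 0)"
proof (induction as rule: asc'.induct)
  case ("2_2" x) then show ?case by (cases bs) auto
qed auto

lemma asc'_ins: assumes "\<forall>v\<in>set as. v < m" "\<forall>v\<in>set bs. v < m"
  shows "asc' (as @ m # bs) = asc' as + asc' bs + (if as\<noteq>[] then 1 else 0)"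
proof -
  have "asc' (m#bs) = asc' bs"
    using asc'_append[of "[m]" bs] assms(2) by (cases bs) auto
  then show ?thesis using asc'_append[of as "m#bs"] assms(1) by (auto simp: last_in_set)
qed

definition Aset :: "nat list \<Rightarrow> nat set" where
  "Aset xs = {j. Suc j < length xs \<and> xs!j < xs!Suc j}"
definition Dset :: "nat list \<Rightarrow> nat set" where
  "Dset xs = {1..length xs} - Suc ` Aset xs"

lemma ascents_Aset: "ascents xs = card (Aset xs)"
  by (simp add: ascents_def Aset_def)

lemma finite_Aset: "finite (Aset xs)"
  by (rule finite_subset[of _ "{..<length xs}"]) (auto simp: Aset_def)

lemma card_Dset: "card (Dset xs) = length xs - ascents xs"
proof -
  have "Suc ` Aset xs \<subseteq> {1..length xs}" by (auto simp: Aset_def)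
  then have "card (Dset xs) = length xs - card (Suc ` Aset xs)"
    unfolding Dset_def by (simp add: card_Diff_subset finite_Aset)
  then show ?thesis by (simp add: card_image ascents_Aset)
qed

lemma ascents_le: "ascents xs \<le> length xs"
proof -
  have "Aset xs \<subseteq> {..<length xs}" by (auto simp: Aset_def)
  then have "card (Aset xs) \<le> card {..<length xs}" by (rule card_mono[OF finite_lessThan])
  then show ?thesis by (simp add: ascents_Aset)
qed

lemma asc_ins: assumes "\<forall>v\<in>set xs. v < m" "i \<le> length xs"
  shows "ascents (take i xs @ m # drop i xs) = ascents xs + (if i \<in> Dset xs then 1 else 0)"
proof -
  let ?as = "take i xs" and ?bs = "drop i xs"
  have m1: "\<forall>v\<in>set ?as. v < m" "\<forall>v\<in>set ?bs. v < m" using assms(1)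
    by (auto dest: in_set_takeD in_set_dropD)
  have a1: "ascents (take i xs @ m # drop i xs) = asc' ?as + asc' ?bs + (if ?as\<noteq>[] then 1 else 0)"
    using asc'_ins[OF m1] by (simp add: asc_eq)
  have a2: "ascents xs = asc' ?as + asc' ?bs + (if ?as \<noteq> [] \<and> ?bs \<noteq> [] \<and> last ?as < hd ?bs then 1 else 0)"
    using asc'_append[of ?as ?bs] by (simp add: asc_eq)
  have ne1: "?as \<noteq> [] \<longleftrightarrow> 0 < i" using assms(2) by auto
  have ne2: "?bs \<noteq> [] \<longleftrightarrow> i < length xs" by auto
  have l: "0 < i \<Longrightarrow> last ?as = xs!(i-1)" using assms(2)
  proof -
    assume "0 < i"
    then have "take i xs \<noteq> []" using assms(2) by auto
    then have "last ?as = ?as ! (length ?as - 1)" by (rule last_conv_nth)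
    then show ?thesis using \<open>0 < i\<close> assms(2) by (simp add: min_absorb1)
  qed
  have h: "i < length xs \<Longrightarrow> hd ?bs = xs!i" by (simp add: hd_drop_conv_nth)
  have D: "i \<in> Dset xs \<longleftrightarrow> 0 < i \<and> \<not> (i < length xs \<and> xs!(i-1) < xs!i)"
  proof
    assume iD: "i \<in> Dset xs"
    then have i0: "0 < i" and nA: "i \<notin> Suc ` Aset xs" unfolding Dset_def by auto
    have "\<not> (i < length xs \<and> xs!(i-1) < xs!i)"
    proof
      assume c: "i < length xs \<and> xs!(i-1) < xs!i"
      have si: "Suc (i-1) = i" using i0 by simp
      then have "i - 1 \<in> Aset xs" using c unfolding Aset_def by simp
      then have "Suc (i-1) \<in> Suc ` Aset xs" by (rule imageI)
      then show False using nA si by simp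
    qed
    then show "0 < i \<and> \<not> (i < length xs \<and> xs!(i-1) < xs!i)" using i0 by simp
  next
    assume "0 < i \<and> \<not> (i < length xs \<and> xs!(i-1) < xs!i)"
    then show "i \<in> Dset xs" using assms(2) unfolding Dset_def Aset_def by (auto simp: image_iff)
  qed
  show ?thesis using a1 a2 ne1 ne2 l h D by auto
qed

lemma card_pos: assumes "\<forall>v\<in>set xs. v < m"
  shows "card {i. i \<le> length xs \<and> ascents (take i xs @ m # drop i xs) = k}
    = (if k = ascents xs then ascents xs + 1 else if k = ascents xs + 1 then length xs - ascents xs else 0)"
proof -
  let ?n = "length xs" and ?a = "ascents xs"
  have Dsub: "Dset xs \<subseteq> {..?n}" by (auto simp: Dset_def)
  have S: "{i. i \<le> ?n \<and> ascents (take i xs @ m # drop i xs) = k}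
      = {i. i \<le> ?n \<and> ?a + (if i \<in> Dset xs then 1 else 0) = k}"
    using asc_ins[OF assms] by auto
  show ?thesis
  proof (cases "k = ?a")
    case True
    then have "{i. i \<le> ?n \<and> ?a + (if i \<in> Dset xs then 1 else 0) = k} = {..?n} - Dset xs" by auto
    moreover have "card ({..?n} - Dset xs) = ?n + 1 - (?n - ?a)"
      using Dsub by (simp add: card_Diff_subset card_Dset finite_subset)
    ultimately show ?thesis using S True ascents_le[of xs] by simp
  next
    case F: False
    show ?thesis
    proof (cases "k = ?a + 1")
      case True
      then have "{i. i \<le> ?n \<and> ?a + (if i \<in> Dset xs then 1 else 0) = k} = Dset xs" using Dsub by auto
      then show ?thesis using S True F by (simp add: card_Dset)
    next
      case False
      then have "{i. i \<le> ?n \<and> ?a + (if i \<in> Dset xs then 1 else 0) = k} = {}" using F by auto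
      then show ?thesis using S F False by simp
    qed
  qed
qed

definition Perm :: "nat \<Rightarrow> nat list set" where
  "Perm n = {xs. distinct xs \<and> set xs = {1..n}}"

lemma finite_Perm: "finite (Perm n)"
proof -
  have "Perm n \<subseteq> {xs. set xs \<subseteq> {1..n} \<and> length xs = n}"
    by (auto simp: Perm_def dest: distinct_card)
  then show ?thesis using finite_lists_length_eq[of "{1..n}" n] finite_subset by auto
qed

lemma Perm_length: "xs \<in> Perm n \<Longrightarrow> length xs = n"
  by (auto simp: Perm_def dest!: distinct_card)

lemma eulerian_Perm: "eulerian n k = card {xs \<in> Perm n. ascents xs = k}"
  by (simp add: eulerian_def Perm_def conj_assoc)

lemma eul_rec: "eulerian (Suc n) k = (k+1) * eulerian n k + (if k = 0 then 0 else (n + 1 - k) * eulerian n (k - 1))"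
proof -
  define ins where "ins = (\<lambda>(xs::nat list, i::nat). take i xs @ Suc n # drop i xs)"
  define B where "B = (\<lambda>xs. {i. i \<le> n \<and> ascents (take i xs @ Suc n # drop i xs) = k})"
  have img: "{ys \<in> Perm (Suc n). ascents ys = k} = ins ` (SIGMA xs:Perm n. B xs)"
  proof (rule set_eqI, rule iffI)
    fix ys assume ys: "ys \<in> {ys \<in> Perm (Suc n). ascents ys = k}"
    then have "Suc n \<in> set ys" by (auto simp: Perm_def)
    then obtain as bs where yd: "ys = as @ Suc n # bs" by (meson split_list)
    have d: "distinct ys" "set ys = {1..Suc n}" using ys by (auto simp: Perm_def)
    have nin: "Suc n \<notin> set as" "Suc n \<notin> set bs" using d(1) yd by auto
    have "set (as @ bs) = {1..Suc n} - {Suc n}" using d(2) nin yd by auto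
    also have "\<dots> = {1..n}" by auto
    finally have sx: "set (as @ bs) = {1..n}" .
    have px: "as @ bs \<in> Perm n" using sx d(1) yd by (auto simp: Perm_def)
    then have lx: "length (as @ bs) = n" by (rule Perm_length)
    have "length as \<in> B (as @ bs)" using ys yd lx unfolding B_def by auto
    then show "ys \<in> ins ` (SIGMA xs:Perm n. B xs)" using px yd
      unfolding ins_def by (intro image_eqI[of _ _ "(as @ bs, length as)"]) auto
  next
    fix ys assume "ys \<in> ins ` (SIGMA xs:Perm n. B xs)"
    then obtain xs i where xi: "xs \<in> Perm n" "i \<in> B xs" "ys = take i xs @ Suc n # drop i xs"
      unfolding ins_def by auto
    have dx: "distinct xs" "set xs = {1..n}" using xi(1) by (auto simp: Perm_def)
    have n1: "Suc n \<notin> set (take i xs)" "Suc n \<notin> set (drop i xs)"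
      using dx(2) by (auto dest: in_set_takeD in_set_dropD)
    have "distinct ys" unfolding xi(3) using n1 dx(1) set_take_disj_set_drop_if_distinct[OF dx(1), of i i]
      by (simp only: distinct_append distinct.simps set_append set_simps distinct_take distinct_drop) auto
    moreover have "set ys = insert (Suc n) (set (take i xs) \<union> set (drop i xs))" using xi(3) by auto
    then have "set ys = insert (Suc n) (set xs)" by (metis append_take_drop_id set_append)
    then have "set ys = {1..Suc n}" using dx(2) by auto
    ultimately show "ys \<in> {ys \<in> Perm (Suc n). ascents ys = k}" using xi unfolding B_def Perm_def by auto
  qed
  have inj: "inj_on ins (SIGMA xs:Perm n. B xs)"
  proof (rule inj_onI)
    fix p q assume p: "p \<in> (SIGMA xs:Perm n. B xs)" and q: "q \<in> (SIGMA xs:Perm n. B xs)"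
      and e: "ins p = ins q"
    obtain xs i where pp: "p = (xs, i)" by (cases p)
    obtain xs' j where qq: "q = (xs', j)" by (cases q)
    have s: "set xs = {1..n}" "set xs' = {1..n}" using p q pp qq by (auto simp: Perm_def)
    have l: "length xs = n" "length xs' = n" using p q pp qq by (auto dest: Perm_length)
    have ij: "i \<le> n" "j \<le> n" using p q pp qq by (auto simp: B_def)
    have "Suc n \<notin> set (take i xs)" "Suc n \<notin> set (drop i xs)"
      using s by (auto dest: in_set_takeD in_set_dropD)
    then have "take i xs = take j xs' \<and> drop i xs = drop j xs'"
      using e pp qq unfolding ins_def by (simp add: append_Cons_eq_iff)
    then have "xs = xs'" "i = j"
      using l ij by (metis append_take_drop_id, metis length_take min_absorb2)
    then show "p = q" using pp qq by simp
  qed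
  have finB: "\<forall>xs\<in>Perm n. finite (B xs)" unfolding B_def by auto
  have "eulerian (Suc n) k = (\<Sum>xs\<in>Perm n. card (B xs))"
    unfolding eulerian_Perm img card_image[OF inj] using finite_Perm finB by simp
  also have "\<dots> = (\<Sum>xs\<in>Perm n. (if ascents xs = k then k + 1 else 0)
      + (if k \<noteq> 0 \<and> ascents xs = k - 1 then n + 1 - k else 0))"
  proof (rule sum.cong[OF refl])
    fix xs assume xs: "xs \<in> Perm n"
    have "\<forall>v\<in>set xs. v < Suc n" using xs by (auto simp: Perm_def)
    from card_pos[OF this, of k] show "card (B xs) = (if ascents xs = k then k + 1 else 0)
      + (if k \<noteq> 0 \<and> ascents xs = k - 1 then n + 1 - k else 0)"
      using Perm_length[OF xs] unfolding B_def by auto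
  qed
  also have "\<dots> = (k+1) * eulerian n k + (if k = 0 then 0 else (n + 1 - k) * eulerian n (k - 1))"
    unfolding sum.distrib eulerian_Perm
    by (simp add: sum.inter_filter[OF finite_Perm, symmetric])
  finally show ?thesis .
qed

lemma eul_zero: "eulerian 0 k = (if k = 0 then 1 else 0)"
proof -
  have "{xs \<in> Perm 0. ascents xs = k} = (if k = 0 then {[]} else {})"
    by (auto simp: Perm_def ascents_def)
  then show ?thesis by (simp add: eulerian_Perm)
qed

lemma eul_big: "n < k \<Longrightarrow> eulerian n k = 0"
proof (induction n arbitrary: k)
  case 0 then show ?case by (simp add: eul_zero)
next
  case (Suc n) then show ?case by (simp add: eul_rec)
qed

lemma eul_diag: "0 < n \<Longrightarrow> eulerian n n = 0"
  by (cases n) (auto simp: eul_rec eul_big)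


lemma pderiv_lin: "pderiv [:c, 1:] = (1 :: real poly)"
  by (simp add: pderiv_pCons)

lemma dB:
  fixes x y :: "real poly"
  assumes "pderiv x = 1" "pderiv y = 1"
  shows "x*y*pderiv (x^i * y^j) = smult (of_nat i) (x^i*y^(Suc j)) + smult (of_nat j) (x^(Suc i) * y^j)"
proof -
  have "pderiv (x^i * y^j) = x^i * smult (of_nat j) (y^(j-1)) + y^j * smult (of_nat i) (x^(i-1))"
    by (simp add: pderiv_mult pderiv_power assms)
  then have "x*y*pderiv (x^i * y^j) = smult (of_nat j) (x^(Suc i) * (y * y^(j-1))) + smult (of_nat i) ((x * x^(i-1)) * y^(Suc j))"
    by (simp add: algebra_simps)
  also have "smult (of_nat j) (x^(Suc i) * (y * y^(j-1))) = smult (of_nat j) (x^(Suc i) * y^j)"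
    by (cases j) simp_all
  also have "smult (of_nat i) ((x * x^(i-1)) * y^(Suc j)) = smult (of_nat i) (x^i * y^(Suc j))"
    by (cases i) simp_all
  finally show ?thesis by simp
qed

definition Pn :: "real \<Rightarrow> real \<Rightarrow> nat \<Rightarrow> real poly" where
  "Pn a b n = (\<Sum>k\<le>n. smult (of_nat (eulerian n k)) ([:-a,1:]^(Suc k) * [:-b,1:]^(n-k)))"

lemma Ppoly_Pn: "Ppoly (Suc n) a b = Pn a b n"
proof (cases n)
  case 0 then show ?thesis by (simp add: Pn_def eul_zero)
next
  case (Suc m)
  have "Ppoly (Suc n) a b = (\<Sum>k\<le>m. smult (of_nat (eulerian (Suc m) k)) ([:-a,1:]^(Suc k) * [:-b,1:]^(Suc m-k)))"
    using Suc by (simp add: atLeast0AtMost of_nat_poly mult.assoc)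
  then show ?thesis using Suc by (simp add: Pn_def eul_diag)
qed

lemma pderiv_sum': "pderiv (\<Sum>k\<in>A. f k) = (\<Sum>k\<in>A. pderiv (f k))"
  using higher_pderiv_sum[of 1 f A] by simp

lemma Pn_rec: "Pn a b (Suc n) = [:-a,1:] * [:-b,1:] * pderiv (Pn a b n)"
proof -
  let ?x = "[:-a,1:] :: real poly" and ?y = "[:-b,1:] :: real poly"
  let ?E = "\<lambda>n k. (of_nat (eulerian n k) :: real)"
  define f where "f k = smult (?E n k * of_nat (Suc k)) (?x^(Suc k) * ?y^(Suc n - k))" for k
  define g where "g k = smult (?E n k * of_nat (n - k)) (?x^(Suc (Suc k)) * ?y^(n - k))" for k
  have "?x * ?y * pderiv (Pn a b n) = (\<Sum>k\<le>n. smult (?E n k) (?x * ?y * pderiv (?x^(Suc k) * ?y^(n-k))))"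
    unfolding Pn_def pderiv_sum' sum_distrib_left by (simp add: pderiv_smult)
  also have "\<dots> = (\<Sum>k\<le>n. f k + g k)"
  proof (rule sum.cong[OF refl])
    fix k assume "k \<in> {..n}"
    then have "Suc (n - k) = Suc n - k" by auto
    then show "smult (?E n k) (?x * ?y * pderiv (?x^(Suc k) * ?y^(n-k))) = f k + g k"
      unfolding dB[OF pderiv_lin pderiv_lin] f_def g_def by (simp add: smult_add_right)
  qed
  also have "\<dots> = sum f {..n} + sum g {..n}" by (rule sum.distrib)
  also have "sum f {..n} = sum f {..Suc n}" using eul_big[of n "Suc n"] by (simp add: f_def)
  also have "\<dots> = f 0 + (\<Sum>k\<le>n. f (Suc k))" by (rule sum.atMost_Suc_shift)
  finally have R: "?x * ?y * pderiv (Pn a b n) = f 0 + (\<Sum>k\<le>n. f (Suc k)) + sum g {..n}" .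
  have "Pn a b (Suc n) = smult (?E (Suc n) 0) (?x * ?y^(Suc n))
     + (\<Sum>k\<le>n. smult (?E (Suc n) (Suc k)) (?x^(Suc (Suc k)) * ?y^(n - k)))"
    unfolding Pn_def by (subst sum.atMost_Suc_shift) simp
  also have "(\<Sum>k\<le>n. smult (?E (Suc n) (Suc k)) (?x^(Suc (Suc k)) * ?y^(n - k)))
      = (\<Sum>k\<le>n. f (Suc k) + g k)"
  proof (rule sum.cong[OF refl])
    fix k assume "k \<in> {..n}"
    have "eulerian (Suc n) (Suc k) = eulerian n (Suc k) * Suc (Suc k) + eulerian n k * (n - k)"
      by (simp add: eul_rec)
    then have "?E (Suc n) (Suc k) = ?E n (Suc k) * of_nat (Suc (Suc k)) + ?E n k * of_nat (n - k)"
      by (simp only: of_nat_add of_nat_mult)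
    then show "smult (?E (Suc n) (Suc k)) (?x^(Suc (Suc k)) * ?y^(n - k)) = f (Suc k) + g k"
      by (simp add: f_def g_def smult_add_left)
  qed
  also have "smult (?E (Suc n) 0) (?x * ?y^(Suc n)) = f 0"
    by (simp add: f_def eul_rec)
  finally show ?thesis using R by (simp add: sum.distrib)
qed

lemma Ppoly_rec: "Ppoly (Suc (Suc n)) a b = [:-a,1:] * [:-b,1:] * pderiv (Ppoly (Suc n) a b)"
  using Pn_rec Ppoly_Pn by metis

lemma smult_sum_r: "smult c (sum f A) = (\<Sum>i\<in>A. smult c (f i))"
  by (induct A rule: infinite_finite_induct) (simp_all add: smult_add_right)

definition Qn :: "real \<Rightarrow> real \<Rightarrow> nat \<Rightarrow> real poly" where
  "Qn a b n = (\<Sum>j\<le>n. smult (of_nat (macmahon (Suc n) (Suc j))) ([:-a,1:]^(n-j) * [:-b,1:]^j))"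

lemma Qpoly_Qn: "Qpoly n a b = Qn a b n"
  unfolding Qpoly_def Qn_def
  using sum.shift_bounds_cl_Suc_ivl[of "\<lambda>k. of_nat (macmahon (n+1) k) * [:-a, 1:] ^ (n + 1 - k) * [:-b, 1:] ^ (k - 1)" 0 n]
  by (simp add: atLeast0AtMost of_nat_poly mult.assoc)

lemma M0: "macmahon m 0 = 0" by (cases m) simp_all
lemma M1: "macmahon (Suc n) (Suc 0) = 1" by simp
lemma Mbig: "macmahon (Suc n) (Suc (Suc n)) = 0" by simp
lemma Mrec: "j \<le> Suc n \<Longrightarrow> macmahon (Suc (Suc n)) (Suc j)
   = macmahon (Suc n) (Suc j) * (2*j+1) + macmahon (Suc n) j * (2*n+3-2*j)"
proof (cases j)
  case 0 then show ?thesis by (simp add: M0)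
next
  case (Suc i)
  assume "j \<le> Suc n"
  then show ?thesis using Suc by (simp add: algebra_simps)
qed

declare macmahon.simps[simp del]

lemma Lsmult: "smult 2 (x * y * pderiv (smult c p)) + (x + y) * smult c p
  = smult c (smult 2 (x * y * pderiv p) + (x + y) * (p :: real poly))"
  by (simp add: pderiv_smult smult_add_right mult.commute)

lemma xy_gen: "((x::'a::comm_ring_1) + y) * (x^m * y^j) = x^(Suc m) * y^j + x^m * y^(Suc j)"
  by (simp add: algebra_simps)

lemma comb_coef: "smult (of_nat m) (smult 2 (smult (of_nat k) A + smult (of_nat j) B) + (B + A))
  = smult (of_nat (m*(2*j+1))) B + smult (of_nat (m*(2*k+1))) (A::real poly)"
  by (simp add: smult_add_right smult_add_left algebra_simps)

lemma Qn_rec: "Qn a b (Suc n) = smult 2 ([:-a,1:] * [:-b,1:] * pderiv (Qn a b n)) + ([:-a,1:] + [:-b,1:]) * Qn a b n"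
proof -
  let ?x = "[:-a,1:] :: real poly" and ?y = "[:-b,1:] :: real poly"
  define f where "f j = smult (of_nat (macmahon (Suc n) (Suc j) * (2*j+1))) (?x^(Suc n - j) * ?y^j)" for j
  define g where "g j = smult (of_nat (macmahon (Suc n) (Suc j) * (2*(n-j)+1))) (?x^(n-j) * ?y^(Suc j))" for j
  define h where "h j = smult (of_nat (macmahon (Suc n) j * (2*n+3-2*j))) (?x^(Suc n - j) * ?y^j)" for j
  have "smult 2 (?x * ?y * pderiv (Qn a b n)) + (?x + ?y) * Qn a b n
     = (\<Sum>j\<le>n. smult (of_nat (macmahon (Suc n) (Suc j)))
          (smult 2 (?x * ?y * pderiv (?x^(n-j) * ?y^j)) + (?x + ?y) * (?x^(n-j) * ?y^j)))"
    unfolding Qn_def pderiv_sum' sum_distrib_left smult_sum_r sum.distrib[symmetric]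
    by (rule sum.cong[OF refl]) (rule Lsmult)
  also have "\<dots> = (\<Sum>j\<le>n. f j + g j)"
  proof (rule sum.cong[OF refl])
    fix j assume j: "j \<in> {..n}"
    then have e: "Suc n - j = Suc (n - j)" by auto
    have xy: "(?x + ?y) * (?x^(n-j) * ?y^j) = ?x^(Suc (n-j)) * ?y^j + ?x^(n-j) * ?y^(Suc j)"
      by (rule xy_gen)
    show "smult (of_nat (macmahon (Suc n) (Suc j)))
          (smult 2 (?x * ?y * pderiv (?x^(n-j) * ?y^j)) + (?x + ?y) * (?x^(n-j) * ?y^j)) = f j + g j"
      unfolding dB[OF pderiv_lin pderiv_lin] xy f_def g_def e
      by (rule comb_coef)
  qed
  also have "\<dots> = sum f {..n} + sum g {..n}" by (rule sum.distrib)
  also have "sum f {..n} = sum f {..Suc n}" by (simp add: f_def Mbig)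
  also have "sum g {..n} = (\<Sum>j\<le>n. h (Suc j))"
  proof (rule sum.cong[OF refl])
    fix j assume "j \<in> {..n}"
    then have "2*n+3-2*Suc j = 2*(n-j)+1" by auto
    then show "g j = h (Suc j)" by (simp add: g_def h_def)
  qed
  also have "\<dots> = sum h {..Suc n}" by (subst sum.atMost_Suc_shift) (simp add: h_def M0)
  finally have R: "smult 2 (?x * ?y * pderiv (Qn a b n)) + (?x + ?y) * Qn a b n = sum f {..Suc n} + sum h {..Suc n}" .
  have "Qn a b (Suc n) = (\<Sum>j\<le>Suc n. f j + h j)"
    unfolding Qn_def
  proof (rule sum.cong[OF refl])
    fix j assume "j \<in> {..Suc n}"
    then have "macmahon (Suc (Suc n)) (Suc j)
      = macmahon (Suc n) (Suc j) * (2*j+1) + macmahon (Suc n) j * (2*n+3-2*j)" by (simp add: Mrec)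
    then show "smult (of_nat (macmahon (Suc (Suc n)) (Suc j))) (?x^(Suc n - j) * ?y^j) = f j + h j"
      unfolding f_def h_def by (simp only: of_nat_add smult_add_left)
  qed
  then show ?thesis using R by (simp add: sum.distrib)
qed

lemma Qpoly_rec: "Qpoly (Suc n) a b = smult 2 ([:-a,1:] * [:-b,1:] * pderiv (Qpoly n a b)) + ([:-a,1:] + [:-b,1:]) * Qpoly n a b"
  by (simp add: Qpoly_Qn Qn_rec)

definition LL :: "real poly \<Rightarrow> real poly" where
  "LL p = smult 2 ([:0,1:] * [:-1,1:] * pderiv p) + ([:0,1:] + [:-1,1:]) * p"

lemma LL_smult: "LL (smult c p) = smult c (LL p)"
  unfolding LL_def by (rule Lsmult)

lemma LL_sum: "LL (sum f A) = (\<Sum>k\<in>A. LL (f k))"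
  unfolding LL_def pderiv_sum' sum_distrib_left smult_sum_r sum.distrib by simp

lemma gen_dd: "(A - B) + (C - D) = (A + C) - (B + (D::'a::ab_group_add))"
  by (simp add: algebra_simps)

lemma LL_diff: "LL (p - q) = LL p - LL q"
  unfolding LL_def pderiv_diff right_diff_distrib smult_diff_right by (rule gen_dd)

abbreviation Q01 where "Q01 n \<equiv> Qpoly n 0 1"

lemma Q_rec01: "Q01 (Suc n) = LL (Q01 n)"
  using Qpoly_rec[of n 0 1] by (simp add: LL_def)

definition cc :: "nat \<Rightarrow> nat \<Rightarrow> real" where "cc n k = of_nat (n choose k) * (-1)^k"

lemma S_eq: "Spoly n 0 1 (-1/2) = (\<Sum>k\<le>n. smult (cc n k) (Q01 (n-k)))"
  unfolding Spoly_def cc_def atLeast0AtMost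
  by (rule sum.cong[OF refl]) (simp add: of_nat_poly mult.commute)

lemma cc_Suc: "cc (Suc n) (Suc k) = cc n (Suc k) - cc n k"
  by (simp add: cc_def algebra_simps)

lemma S_rec: "Spoly (Suc n) 0 1 (-1/2) = LL (Spoly n 0 1 (-1/2)) - Spoly n 0 1 (-1/2)"
proof -
  have A: "Spoly (Suc n) 0 1 (-1/2) = smult (cc (Suc n) 0) (Q01 (Suc n)) + (\<Sum>k\<le>n. smult (cc (Suc n) (Suc k)) (Q01 (n-k)))"
    unfolding S_eq by (subst sum.atMost_Suc_shift) simp
  also have "(\<Sum>k\<le>n. smult (cc (Suc n) (Suc k)) (Q01 (n-k)))
      = (\<Sum>k\<le>n. smult (cc n (Suc k)) (Q01 (n-k))) - (\<Sum>k\<le>n. smult (cc n k) (Q01 (n-k)))"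
    unfolding cc_Suc smult_diff_left sum_subtractf ..
  finally have A': "Spoly (Suc n) 0 1 (-1/2) = smult (cc (Suc n) 0) (Q01 (Suc n)) + 
     (\<Sum>k\<le>n. smult (cc n (Suc k)) (Q01 (n-k))) - Spoly n 0 1 (-1/2)"
    unfolding S_eq by simp
  have "LL (Spoly n 0 1 (-1/2)) = (\<Sum>k\<le>n. smult (cc n k) (Q01 (Suc n - k)))"
    unfolding S_eq LL_sum LL_smult Q_rec01[symmetric]
    by (rule sum.cong[OF refl]) (simp add: Suc_diff_le)
  also have "\<dots> = (\<Sum>k\<le>Suc n. smult (cc n k) (Q01 (Suc n - k)))" by (simp add: cc_def)
  also have "\<dots> = smult (cc n 0) (Q01 (Suc n)) + (\<Sum>k\<le>n. smult (cc n (Suc k)) (Q01 (n-k)))"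
    by (subst sum.atMost_Suc_shift) simp
  finally show ?thesis using A' by (simp add: cc_def)
qed

lemma gen_e2: "(p+q)*T - T = (p+q-1)*(T::'a::comm_ring_1)"
  by (simp add: algebra_simps)

lemma final_alg: "x * (x*y*D + y*T) = x*y*(T + x*(D::real poly))"
  by (simp add: algebra_simps)

lemma main_eq: "Ppoly (n + 1) 0 1 = smult (1 / 2 ^ n) ([:0, 1:] * Spoly n 0 1 (-1/2))"
proof (induction n)
  case 0
  have "Spoly 0 0 1 (-1/2) = 1" by (simp add: Spoly_def Qpoly_def macmahon.simps)
  then show ?case by simp
next
  case (Suc n)
  define T where "T = smult (1/2^n) (Spoly n 0 1 (-1/2))"
  have S: "Spoly n 0 1 (-1/2) = smult (2^n) T" by (simp add: T_def)
  have P: "Ppoly (Suc n) 0 1 = [:0,1:] * T" using Suc by (simp add: T_def)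
  have e1: "[:0,1:] + [:-1,1:] - 1 = smult 2 [:-1,1::real:]" by (simp add: one_pCons)
  have e2: "([:0,1:] + [:-1,1:]) * T - T = smult 2 ([:-1,1:] * T)"
    unfolding gen_e2 e1 by (rule mult_smult_left)
  have "smult (1 / 2 ^ Suc n) (Spoly (Suc n) 0 1 (-1/2)) = smult (1/2) (LL T - T)"
    unfolding S_rec S LL_smult smult_diff_right[symmetric] by simp
  also have "LL T - T = smult 2 ([:0,1:] * [:-1,1:] * pderiv T) + (([:0,1:] + [:-1,1:]) * T - T)"
    unfolding LL_def by (rule add_diff_eq[symmetric])
  also have "\<dots> = smult 2 ([:0,1:] * [:-1,1:] * pderiv T + [:-1,1:] * T)"
    unfolding e2 by (rule smult_add_right[symmetric])
  finally have TT: "smult (1 / 2 ^ Suc n) (Spoly (Suc n) 0 1 (-1/2)) = [:0,1:] * [:-1,1:] * pderiv T + [:-1,1:] * T"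
    by simp
  have "Ppoly (Suc n + 1) 0 1 = [:0,1:] * [:-1,1:] * pderiv ([:0,1:] * T)"
    using Ppoly_rec[of n 0 1] P by simp
  also have "\<dots> = [:0,1:] * [:-1,1:] * (T + [:0,1:] * pderiv T)"
    by (simp add: pderiv_mult pderiv_pCons)
  also have "\<dots> = [:0,1:] * ([:0,1:] * [:-1,1:] * pderiv T + [:-1,1:] * T)"
    by (rule final_alg[symmetric])
  finally show ?case unfolding TT[symmetric] by simp
qed

definition Zp :: "real poly \<Rightarrow> bool" where "Zp p \<longleftrightarrow> (\<forall>i. coeff p i \<in> \<int>)"

lemma Zp_mult: "Zp p \<Longrightarrow> Zp q \<Longrightarrow> Zp (p * q)"
  unfolding Zp_def coeff_mult by (auto intro!: Ints_sum Ints_mult)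

lemma Zp_pderiv: "Zp p \<Longrightarrow> Zp (pderiv p)"
  unfolding Zp_def coeff_pderiv by (auto intro!: Ints_mult)

lemma Zp_lin: "a \<in> \<int> \<Longrightarrow> Zp [:a, 1:]"
  unfolding Zp_def by (auto simp: coeff_pCons split: nat.split)

lemma Zp_P: "Zp (Ppoly (Suc n) 0 1)"
proof (induction n)
  case 0 then show ?case using Zp_lin[of 0] by simp
next
  case (Suc n)
  have "Zp ([:-0,1:] * [:-1,1:] * pderiv (Ppoly (Suc n) 0 1))"
    by (intro Zp_mult Zp_pderiv Zp_lin Suc) auto
  then show ?case by (simp only: Ppoly_rec)
qed

theorem mainTheorem8:
  fixes n :: nat
  shows "Ppoly (n + 1) 0 1 = smult (1 / 2 ^ n) ([:0, 1:] * Spoly n 0 1 (-1/2))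
    \<and> (\<forall>i. coeff (smult (1 / 2 ^ n) (Spoly n 0 1 (-1/2))) i \<in> \<int>)"
proof
  show E: "Ppoly (n + 1) 0 1 = smult (1 / 2 ^ n) ([:0, 1:] * Spoly n 0 1 (-1/2))" by (rule main_eq)
  show "\<forall>i. coeff (smult (1 / 2 ^ n) (Spoly n 0 1 (-1/2))) i \<in> \<int>"
  proof
    fix i
    have "coeff (Ppoly (Suc n) 0 1) (Suc i) = coeff (smult (1 / 2 ^ n) (Spoly n 0 1 (-1/2))) i"
      using E by simp
    then show "coeff (smult (1 / 2 ^ n) (Spoly n 0 1 (-1/2))) i \<in> \<int>"
      using Zp_P[of n] unfolding Zp_def by metis
  qed
qed


end
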